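(* Let $p\ne q$ be primes and let $T\colon\mathbb{Z}_p\times\mathbb{Z}_q^2\to\mathbb{N}$ be a multiset such that $\chi_{x+y}(T)=0$ for every nonzero $x\in\mathbb{Z}_p$ and every nonzero $y\in\mathbb{Z}_q^2$. For $i\in\mathbb{Z}_p$ define $g_i\colon\mathbb{Z}_q^2\to\mathbb{N}$ by $g_i(z)=T(i+z)$. Then $g_i-g_j$ is a constant function for all $i,j\in\mathbb{Z}_p$.
   Context: An element of $\mathbb{Z}_p\times\mathbb{Z}_q^2$ is written $x+y$ with $x\in\mathbb{Z}_p$, $y\in\mathbb{Z}_q^2$. For $w=x+y$ the character $\chi_w$ is $\chi_w(x'+y')=\exp\big(2\pi i(\tfrac{xx'}{p}+\tfrac{y\cdot y'}{q})\big)$, and for a multiset $T$, $\chi_w(T)=\sum_{z}T(z)\chi_w(z)$. *)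

theory Defs
  imports "HOL-Analysis.Analysis"
begin

text \<open>Elements of Z_p x Z_q^2 are represented by triples (x, (y1, y2)) with
  x in {0..<p}, y1, y2 in {0..<q}. A multiset T on this group is a function
  to nat; only its values on the carrier matter.\<close>

definition grp :: "nat \<Rightarrow> nat \<Rightarrow> (nat \<times> (nat \<times> nat)) set" where
  "grp p q = {0..<p} \<times> ({0..<q} \<times> {0..<q})"

definition chr :: "nat \<Rightarrow> nat \<Rightarrow> nat \<times> (nat \<times> nat) \<Rightarrow> nat \<times> (nat \<times> nat) \<Rightarrow> complex" where
  "chr p q w z = (case w of (x, (y1, y2)) \<Rightarrow> case z of (x', (y1', y2')) \<Rightarrow>
     exp (2 * of_real pi * \<i> *
          of_real (real (x * x') / real p + real (y1 * y1' + y2 * y2') / real q)))"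

definition chiT :: "nat \<Rightarrow> nat \<Rightarrow> nat \<times> (nat \<times> nat) \<Rightarrow> (nat \<times> (nat \<times> nat) \<Rightarrow> nat) \<Rightarrow> complex" where
  "chiT p q w T = (\<Sum>z\<in>grp p q. of_nat (T z) * chr p q w z)"

end

theory Submission
  imports Defs
begin

definition E :: "nat \<Rightarrow> nat \<Rightarrow> complex" where
  "E n k = exp (2 * of_real pi * \<i> * of_real (real k / real n))"

lemma E_add: "E n (a + b) = E n a * E n b"
  unfolding E_def by (simp add: add_divide_distrib distrib_left exp_add[symmetric])

lemma E_mult_n: "n > 0 \<Longrightarrow> E n (n * k) = 1"
proof -
  assume n: "n > 0"
  have "E n (n*k) = exp (of_nat k * (2 * of_real pi * \<i>))"
    unfolding E_def using n by (simp add: mult_ac)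
  also have "\<dots> = 1" by (simp add: exp_of_nat_mult)
  finally show ?thesis .
qed

lemma E_pow: "E n (x * k) = E n k ^ x"
proof -
  have eq: "2 * of_real pi * \<i> * of_real (real (x * k) / real n) =
     of_nat x * (2 * of_real pi * \<i> * of_real (real k / real n))"
    by (simp add: mult_ac)
  show ?thesis unfolding E_def by (simp only: eq exp_of_nat_mult)
qed

lemma E_sum: assumes n: "n > 0"
  shows "(\<Sum>x<n. E n (x * k)) = (if n dvd k then of_nat n else 0)"
proof (cases "n dvd k")
  case True
  then obtain m where "k = n * m" by blast
  then have "\<And>x. E n (x * k) = 1" using E_mult_n[OF n, of "x*m" for x]
    by (simp add: mult_ac)
  then show ?thesis using True by simp
next
  case False
  have ne: "E n k \<noteq> 1"
  proof
    assume "E n k = 1"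
    then obtain m :: int where m: "2 * pi * (real k / real n) = 2 * pi * m"
      unfolding E_def exp_eq_1 by auto
    then have "real k = real n * m" using n by (simp add: field_simps)
    then have "int k = int n * m" by (metis of_int_eq_iff of_int_mult of_int_of_nat_eq)
    then have "int n dvd int k" by auto
    then show False using False by simp
  qed
  have "(\<Sum>x<n. E n (x * k)) = (\<Sum>x<n. E n k ^ x)" by (simp add: E_pow)
  also have "\<dots> = (E n k ^ n - 1) / (E n k - 1)" using ne by (rule geometric_sum)
  also have "E n k ^ n = 1" using E_mult_n[OF n, of k] E_pow[of n n k] by simp
  finally show ?thesis using False by simp
qed

lemma dvd_lemma: fixes i j n :: nat assumes "i < n" "j < n" shows "n dvd (i + (n - j)) \<longleftrightarrow> i = j"
proof
  assume "n dvd (i + (n - j))"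
  then obtain c :: nat where c: "i + (n - j) = n * c" by blast
  have "c \<ge> 1" using c assms by (cases c) auto
  moreover have "c < 2" using c assms by (cases c) (auto, cases "c - 1", auto)
  ultimately have "c = 1" by simp
  then show "i = j" using c assms by simp
qed (use assms in simp)

lemma E_delta: assumes n: "n > 0" and "i < n" "j < n"
  shows "(\<Sum>x<n. E n (x * (i + (n - j)))) = (if i = j then of_nat n else 0)"
  using E_sum[OF n, of "i + (n - j)"] dvd_lemma[OF assms(2,3)] by simp

lemma inv1:
  fixes f :: "nat \<Rightarrow> complex"
  assumes n: "n > 0" and h: "\<And>x. x \<in> {1..<n} \<Longrightarrow> (\<Sum>i<n. f i * E n (x * i)) = 0"
    and j: "j < n"
  shows "f j = (\<Sum>i<n. f i) / of_nat n"
proof -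
  define S where "S x = (\<Sum>i<n. f i * E n (x * i))" for x
  have "(\<Sum>x<n. E n (x * (n - j)) * S x) = (\<Sum>x\<in>{0..<n}. E n (x * (n - j)) * S x)"
    by (simp add: lessThan_atLeast0)
  also have "\<dots> = E n (0 * (n - j)) * S 0 + (\<Sum>x\<in>{Suc 0..<n}. E n (x * (n - j)) * S x)"
    using n by (simp add: sum.atLeast_Suc_lessThan)
  also have "(\<Sum>x\<in>{Suc 0..<n}. E n (x * (n - j)) * S x) = 0"
    using h by (intro sum.neutral) (auto simp: S_def)
  finally have L: "(\<Sum>x<n. E n (x * (n - j)) * S x) = (\<Sum>i<n. f i)"
    by (simp add: S_def E_def)
  have "(\<Sum>x<n. E n (x * (n - j)) * S x) = (\<Sum>x<n. \<Sum>i<n. f i * E n (x * (i + (n - j))))"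
    unfolding S_def by (simp add: sum_distrib_left E_add algebra_simps)
  also have "\<dots> = (\<Sum>i<n. f i * (\<Sum>x<n. E n (x * (i + (n - j)))))"
    by (subst sum.swap) (simp add: sum_distrib_left)
  also have "\<dots> = (\<Sum>i<n. if i = j then f i * of_nat n else 0)"
    using j by (intro sum.cong refl) (simp only: E_delta[OF n] lessThan_iff, simp)
  also have "\<dots> = f j * of_nat n" using j by simp
  finally show ?thesis using L n by (simp add: field_simps)
qed

lemma inv2:
  fixes h :: "nat \<times> nat \<Rightarrow> complex"
  assumes n: "n > 0"
    and hy: "\<And>y. y \<in> {0..<n} \<times> {0..<n} \<Longrightarrow> y \<noteq> (0,0) \<Longrightarrow>
        (\<Sum>z\<in>{0..<n} \<times> {0..<n}. h z * E n (fst y * fst z + snd y * snd z)) = 0"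
    and a: "a \<in> {0..<n} \<times> {0..<n}"
  shows "h a = (\<Sum>z\<in>{0..<n} \<times> {0..<n}. h z) / (of_nat n)^2"
proof -
  define Q where "Q = {0..<n} \<times> {0..<n}"
  obtain a1 a2 where aa: "a = (a1, a2)" "a1 < n" "a2 < n" using a by auto
  define S where "S y = (\<Sum>z\<in>Q. h z * E n (fst y * fst z + snd y * snd z))" for y
  define W where "W y = E n (fst y * (n - a1) + snd y * (n - a2))" for y
  have fQ: "finite Q" and z0: "(0,0) \<in> Q" using n by (auto simp: Q_def)
  have "(\<Sum>y\<in>Q. W y * S y) = W (0,0) * S (0,0) + (\<Sum>y\<in>Q - {(0,0)}. W y * S y)"
    using fQ z0 by (simp add: sum.remove)
  also have "(\<Sum>y\<in>Q - {(0,0)}. W y * S y) = 0"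
    using hy by (intro sum.neutral) (auto simp: S_def Q_def)
  finally have L: "(\<Sum>y\<in>Q. W y * S y) = (\<Sum>z\<in>Q. h z)"
    by (simp add: S_def W_def E_def)
  have "(\<Sum>y\<in>Q. W y * S y) = (\<Sum>y\<in>Q. \<Sum>z\<in>Q. h z *
      (E n (fst y * (fst z + (n - a1))) * E n (snd y * (snd z + (n - a2)))))"
    unfolding S_def W_def sum_distrib_left
    by (intro sum.cong refl) (simp add: E_add[symmetric] algebra_simps)
  also have "\<dots> = (\<Sum>z\<in>Q. h z * (\<Sum>y\<in>Q.
      (E n (fst y * (fst z + (n - a1))) * E n (snd y * (snd z + (n - a2))))))"
    by (subst sum.swap) (simp add: sum_distrib_left)
  also have "\<dots> = (\<Sum>z\<in>Q. h z * ((\<Sum>y1<n. E n (y1 * (fst z + (n - a1)))) *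
                                    (\<Sum>y2<n. E n (y2 * (snd z + (n - a2))))))"
    unfolding Q_def by (simp add: sum_product sum.cartesian_product lessThan_atLeast0 case_prod_beta)
  also have "\<dots> = (\<Sum>z\<in>Q. if z = a then h z * (of_nat n)^2 else 0)"
  proof (intro sum.cong refl)
    fix z assume z: "z \<in> Q"
    then have "fst z < n" "snd z < n" by (auto simp: Q_def)
    then show "h z * ((\<Sum>y1<n. E n (y1 * (fst z + (n - a1)))) *
                                    (\<Sum>y2<n. E n (y2 * (snd z + (n - a2))))) =
        (if z = a then h z * (of_nat n)^2 else 0)"
      using aa by (simp only: E_delta[OF n]) (auto simp: power2_eq_square prod_eq_iff)
  qed
  also have "\<dots> = h a * (of_nat n)^2" using a by (simp add: Q_def)
  finally show ?thesis using L n by (simp add: field_simps Q_def)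
qed

lemma chr_split: "chr p q (x, y) (i, z) = E p (x * i) * E q (fst y * fst z + snd y * snd z)"
  unfolding chr_def E_def
  by (cases y; cases z) (simp add: distrib_left exp_add[symmetric])

theorem proposition4p2:
  fixes p q :: nat and T :: "nat \<times> (nat \<times> nat) \<Rightarrow> nat"
  assumes "prime p" and "prime q" and "p \<noteq> q"
    and "\<And>x y. x \<in> {1..<p} \<Longrightarrow> y \<in> {0..<q} \<times> {0..<q} \<Longrightarrow> y \<noteq> (0, 0) \<Longrightarrow>
           chiT p q (x, y) T = 0"
  shows "\<forall>i\<in>{0..<p}. \<forall>j\<in>{0..<p}. \<exists>c::int.
           \<forall>z\<in>{0..<q} \<times> {0..<q}. int (T (i, z)) - int (T (j, z)) = c"
proof (intro ballI)
  fix i j assume i: "i \<in> {0..<p}" and j: "j \<in> {0..<p}"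
  have p0: "p > 0" and q0: "q > 0" using assms(1,2) prime_gt_0_nat by auto
  define Q where "Q = {0..<q} \<times> {0..<q}"
  define f where "f y k = (\<Sum>z\<in>Q. of_nat (T (k, z)) * E q (fst y * fst z + snd y * snd z))" for y k
  have feq: "f y i = f y j" if y: "y \<in> Q" "y \<noteq> (0,0)" for y
  proof -
    have "(\<Sum>k<p. f y k * E p (x * k)) = 0" if x: "x \<in> {1..<p}" for x
    proof -
      have "chiT p q (x, y) T = (\<Sum>k\<in>{0..<p}. \<Sum>z\<in>Q. of_nat (T (k, z)) * chr p q (x, y) (k, z))"
        unfolding chiT_def grp_def Q_def by (simp add: sum.cartesian_product)
      also have "\<dots> = (\<Sum>k<p. f y k * E p (x * k))"
        unfolding f_def sum_distrib_right chr_split lessThan_atLeast0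
        by (intro sum.cong refl) (simp add: mult_ac)
      finally show ?thesis using assms(4)[OF x] y by (simp add: Q_def)
    qed
    then have fk: "\<And>k. k < p \<Longrightarrow> f y k = (\<Sum>k<p. f y k) / of_nat p"
      using inv1[OF p0, of "f y"] by blast
    have "i < p" "j < p" using i j by auto
    then have "f y i = (\<Sum>k<p. f y k) / of_nat p" "f y j = (\<Sum>k<p. f y k) / of_nat p"
      using fk by blast+
    then show ?thesis by (simp only:)
  qed
  define h where "h z = of_nat (T (i, z)) - (of_nat (T (j, z)) :: complex)" for z
  have hc: "h a = (\<Sum>z\<in>Q. h z) / (of_nat q)^2" if a: "a \<in> Q" for a
  proof -
    have "h a = (\<Sum>z\<in>{0..<q} \<times> {0..<q}. h z) / (of_nat q)^2"
    proof (rule inv2[OF q0])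
      fix y assume y: "y \<in> {0..<q} \<times> {0..<q}" "y \<noteq> (0,0)"
      have fy: "f y i = f y j" using feq y unfolding Q_def by blast
      have "(\<Sum>z\<in>Q. h z * E q (fst y * fst z + snd y * snd z)) = f y i - f y j"
        unfolding f_def h_def sum_subtractf[symmetric] by (intro sum.cong refl) (rule left_diff_distrib)
      then show "(\<Sum>z\<in>{0..<q} \<times> {0..<q}. h z * E q (fst y * fst z + snd y * snd z)) = 0"
        using fy unfolding Q_def by simp
    next
      show "a \<in> {0..<q} \<times> {0..<q}" using a unfolding Q_def .
    qed
    then show ?thesis unfolding Q_def .
  qed
  have z0: "(0,0) \<in> Q" using q0 by (simp add: Q_def)
  show "\<exists>c::int. \<forall>z\<in>{0..<q} \<times> {0..<q}. int (T (i, z)) - int (T (j, z)) = c"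
  proof (intro exI ballI)
    fix z assume z: "z \<in> {0..<q} \<times> {0..<q}"
    have zQ: "z \<in> Q" using z unfolding Q_def .
    have "h z = h (0,0)" using hc[OF zQ] hc[OF z0] by (simp only:)
    then have "complex_of_int (int (T (i, z)) - int (T (j, z))) =
               complex_of_int (int (T (i, (0,0))) - int (T (j, (0,0))))"
      unfolding h_def by simp
    then show "int (T (i, z)) - int (T (j, z)) = int (T (i, (0,0))) - int (T (j, (0,0)))"
      using of_int_eq_iff by blast
  qed
qed

end
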